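(* Let $n\ge 1$ and let $\ell_1,\dots,\ell_n$ be positive integers or half-integers such that $N=\ell_1+\dots+\ell_n$ is an integer. Let $a\in\mathbb{C}$ and consider, on the open set of $(w,x_1,\dots,x_n,z_1,\dots,z_N)\in\mathbb{C}^{1+n+N}$ where all these $1+n+N$ points are pairwise distinct, any local holomorphic branch $f$ of the multivalued function $$f=\Big(\prod_{1\le i<j\le n}(x_j-x_i)^{2\ell_i\ell_j a}\Big)\Big(\prod_{i=1}^n\prod_{k=1}^N (z_k-x_i)^{-2\ell_i a}\Big)\Big(\prod_{1\le r<s\le N}(z_s-z_r)^{2a}\Big)\Big(\prod_{k=1}^N (z_k-w)^{2a-2}\Big)\Big(\prod_{i=1}^n (x_i-w)^{2\ell_i(1-a)}\Big).$$ For $r=1,\dots,N$ define the rational function $$g_r(w,x_1,\dots,x_n,z_1,\dots,z_N)=-\Big(\prod_{i=1}^n\Big(\frac{z_r-x_i}{w-x_i}\Big)^{2\ell_i}\Big)\Big(\prod_{s=1,\,s\ne r}^N\Big(\frac{w-z_s}{z_r-z_s}\Big)^2\Big).$$ Then $$\frac{\partial f}{\partial w}=\sum_{r=1}^N\frac{\partial}{\partial z_r}\big(g_r f\big).$$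
   Context: Here $a$ plays the role of $\alpha_-^2$ (a Coulomb-gas parameter). Since $2\ell_i$ are integers, each $g_r$ is single-valued. The choice of branch of $f$ only changes $f$ by a constant multiplicative factor, which does not affect the identity. *)

theory Defs
  imports "HOL-Analysis.Analysis"
begin

text \<open>A point of C^(1+n+N) is represented as a triple (w, x, z) with
  x i (i = 1..n) and z k (k = 1..N); other indices are irrelevant.\<close>

type_synonym cpoint = "complex \<times> (nat \<Rightarrow> complex) \<times> (nat \<Rightarrow> complex)"

definition config :: "nat \<Rightarrow> nat \<Rightarrow> cpoint set" where
  "config n N = {(w, x, z).
     (\<forall>i\<in>{1..n}. x i \<noteq> w) \<and> (\<forall>k\<in>{1..N}. z k \<noteq> w) \<and>
     inj_on x {1..n} \<and> inj_on z {1..N} \<and>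
     (\<forall>i\<in>{1..n}. \<forall>k\<in>{1..N}. x i \<noteq> z k)}"

text \<open>f is a holomorphic branch on U of the multivalued function
  prod (x_j-x_i)^(2 l_i l_j a) prod (z_k-x_i)^(-2 l_i a) prod (z_s-z_r)^(2a)
  prod (z_k-w)^(2a-2) prod (x_i-w)^(2 l_i (1-a)):
  each factor c^e is realised as exp (e * L) with L a continuous logarithm of c on U.\<close>
definition is_branch ::
  "nat \<Rightarrow> nat \<Rightarrow> (nat \<Rightarrow> real) \<Rightarrow> complex \<Rightarrow> cpoint set \<Rightarrow> (cpoint \<Rightarrow> complex) \<Rightarrow> bool" where
  "is_branch n N l a U f \<longleftrightarrow>
    (\<exists>(Lxx :: nat \<Rightarrow> nat \<Rightarrow> cpoint \<Rightarrow> complex) (Lzx :: nat \<Rightarrow> nat \<Rightarrow> cpoint \<Rightarrow> complex)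
        (Lzz :: nat \<Rightarrow> nat \<Rightarrow> cpoint \<Rightarrow> complex) (Lzw :: nat \<Rightarrow> nat \<Rightarrow> cpoint \<Rightarrow> complex)
        (Lxw :: nat \<Rightarrow> nat \<Rightarrow> cpoint \<Rightarrow> complex).
       (\<forall>i\<in>{1..n}. \<forall>j\<in>{1..n}. i < j \<longrightarrow> continuous_on U (Lxx i j)) \<and>
       (\<forall>i\<in>{1..n}. \<forall>k\<in>{1..N}. continuous_on U (Lzx i k)) \<and>
       (\<forall>r\<in>{1..N}. \<forall>s\<in>{1..N}. r < s \<longrightarrow> continuous_on U (Lzz r s)) \<and>
       (\<forall>k\<in>{1..N}. continuous_on U (Lzw k 0)) \<and>
       (\<forall>i\<in>{1..n}. continuous_on U (Lxw i 0)) \<and>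
       (\<forall>(w, x, z)\<in>U.
          (\<forall>i\<in>{1..n}. \<forall>j\<in>{1..n}. i < j \<longrightarrow> exp (Lxx i j (w, x, z)) = x j - x i) \<and>
          (\<forall>i\<in>{1..n}. \<forall>k\<in>{1..N}. exp (Lzx i k (w, x, z)) = z k - x i) \<and>
          (\<forall>r\<in>{1..N}. \<forall>s\<in>{1..N}. r < s \<longrightarrow> exp (Lzz r s (w, x, z)) = z s - z r) \<and>
          (\<forall>k\<in>{1..N}. exp (Lzw k 0 (w, x, z)) = z k - w) \<and>
          (\<forall>i\<in>{1..n}. exp (Lxw i 0 (w, x, z)) = x i - w) \<and>
          f (w, x, z) = exp (
              (\<Sum>j\<in>{1..n}. \<Sum>i\<in>{1..<j}. 2 * of_real (l i) * of_real (l j) * a * Lxx i j (w, x, z))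
            + (\<Sum>i\<in>{1..n}. \<Sum>k\<in>{1..N}. - 2 * of_real (l i) * a * Lzx i k (w, x, z))
            + (\<Sum>s\<in>{1..N}. \<Sum>r\<in>{1..<s}. 2 * a * Lzz r s (w, x, z))
            + (\<Sum>k\<in>{1..N}. (2 * a - 2) * Lzw k 0 (w, x, z))
            + (\<Sum>i\<in>{1..n}. 2 * of_real (l i) * (1 - a) * Lxw i 0 (w, x, z)))))"

text \<open>The rational functions g_r; 2 l_i is a positive integer.\<close>
definition g_fun :: "nat \<Rightarrow> nat \<Rightarrow> (nat \<Rightarrow> real) \<Rightarrow> nat \<Rightarrow> cpoint \<Rightarrow> complex" where
  "g_fun n N l r p = (case p of (w, x, z) \<Rightarrow>
     - ((\<Prod>i\<in>{1..n}. ((z r - x i) / (w - x i)) ^ nat \<lfloor>2 * l i\<rfloor>) *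
        (\<Prod>s\<in>{1..N} - {r}. ((w - z s) / (z r - z s)) ^ 2)))"

end

theory Submission
  imports Defs "HOL-Computational_Algebra.Polynomial"
begin

lemma double_root_dvd:
  fixes p :: "complex poly"
  assumes "poly p a = 0" "poly (pderiv p) a = 0"
  shows "[:-a,1:]^2 dvd p"
proof -
  obtain q where q: "p = [:-a,1:] * q" using assms(1) poly_eq_0_iff_dvd by blast
  have "pderiv p = [:-a,1:] * pderiv q + q * pderiv [:-a,1:]" unfolding q by (rule pderiv_mult)
  then have "pderiv p = [:-a,1:] * pderiv q + q" by (simp add: pderiv_pCons)
  then have "poly q a = 0" using assms(2) by simp
  then obtain q' where q': "q = [:-a,1:] * q'" using poly_eq_0_iff_dvd by blast
  have "p = [:-a,1:] * ([:-a,1:] * q')" using q q' by simp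
  then have "p = [:-a,1:]^2 * q'" by (simp only: power2_eq_square mult.assoc)
  then show ?thesis by simp
qed

lemma prod_sq_dvd:
  fixes T :: "complex poly"
  assumes "finite S" "inj_on z S"
    "\<And>s. s \<in> S \<Longrightarrow> poly T (z s) = 0 \<and> poly (pderiv T) (z s) = 0"
  shows "(\<Prod>s\<in>S. [:-z s,1:]^2) dvd T"
  using assms
proof (induction S rule: finite_induct)
  case empty then show ?case by simp
next
  case (insert s S)
  have "(\<Prod>t\<in>S. [:-z t,1:]^2) dvd T" using insert by (auto simp: inj_on_insert)
  then obtain T1 where T1: "T = (\<Prod>t\<in>S. [:-z t,1:]^2) * T1" by blast
  define A where "A = (\<Prod>t\<in>S. [:-z t,1:]^2)"
  have A0: "poly A (z s) \<noteq> 0"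
    using insert.prems(1) insert.hyps(1,2) unfolding A_def by (auto simp: poly_prod inj_on_def prod_zero_iff)
  have "poly T (z s) = 0" "poly (pderiv T) (z s) = 0" using insert.prems(2) by auto
  moreover have "pderiv T = A * pderiv T1 + T1 * pderiv A" unfolding T1 A_def by (rule pderiv_mult)
  ultimately have "poly T1 (z s) = 0" "poly (pderiv T1) (z s) = 0"
    using A0 T1 unfolding A_def[symmetric] by auto
  then have "[:-z s,1:]^2 dvd T1" by (rule double_root_dvd)
  then obtain T2 where "T1 = [:-z s,1:]^2 * T2" by blast
  then have "T = ([:-z s,1:]^2 * A) * T2" using T1 unfolding A_def[symmetric] by (simp add: ac_simps)
  then show ?case using insert.hyps unfolding A_def by simp
qed

lemma DERIV_prod_logd:
  fixes \<phi> :: "nat \<Rightarrow> complex \<Rightarrow> complex"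
  assumes "finite S" "\<And>i. i \<in> S \<Longrightarrow> (\<phi> i has_field_derivative \<phi> i t0 * D i) (at t0)"
  shows "((\<lambda>t. \<Prod>i\<in>S. \<phi> i t) has_field_derivative (\<Prod>i\<in>S. \<phi> i t0) * (\<Sum>i\<in>S. D i)) (at t0)"
  using assms
proof (induction S rule: finite_induct)
  case empty then show ?case by simp
next
  case (insert a S)
  have "((\<lambda>t. \<phi> a t * (\<Prod>i\<in>S. \<phi> i t)) has_field_derivative
      (\<phi> a t0 * D a) * (\<Prod>i\<in>S. \<phi> i t0) + ((\<Prod>i\<in>S. \<phi> i t0) * (\<Sum>i\<in>S. D i)) * \<phi> a t0) (at t0)"
  proof (rule DERIV_mult)
    show "(\<phi> a has_field_derivative \<phi> a t0 * D a) (at t0)" using insert.prems by simp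
    show "((\<lambda>t. \<Prod>i\<in>S. \<phi> i t) has_field_derivative (\<Prod>i\<in>S. \<phi> i t0) * (\<Sum>i\<in>S. D i)) (at t0)"
      using insert.IH insert.prems by simp
  qed
  then show ?case using insert.hyps by (simp add: algebra_simps)
qed

lemma DERIV_pow_logd:
  fixes h :: "complex \<Rightarrow> complex"
  assumes "(h has_field_derivative h') (at t0)" "h t0 \<noteq> 0"
  shows "((\<lambda>t. h t ^ m) has_field_derivative h t0 ^ m * (of_nat m * h' / h t0)) (at t0)"
proof (cases m)
  case 0 then show ?thesis by simp
next
  case (Suc k)
  have "((\<lambda>t. h t ^ m) has_field_derivative of_nat m * h t0 ^ (m - 1) * h') (at t0)"
    using assms(1) by (auto intro!: derivative_eq_intros)
  moreover have "of_nat m * h t0 ^ (m - 1) * h' = h t0 ^ m * (of_nat m * h' / h t0)"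
    using assms(2) Suc by (simp add: field_simps)
  ultimately show ?thesis by simp
qed

lemma pderiv_sum': "pderiv (sum f A) = (\<Sum>x\<in>A. pderiv (f x))"
  using higher_pderiv_sum[of 1 f A] by simp

lemma sum_single:
  assumes "finite A" "r \<in> A" "\<And>s. s \<in> A \<Longrightarrow> s \<noteq> r \<Longrightarrow> F s = 0"
  shows "sum F A = F r"
proof -
  have "sum F A = F r + sum F (A - {r})" using assms by (simp add: sum.remove)
  also have "sum F (A - {r}) = 0" using assms by (intro sum.neutral) auto
  finally show ?thesis by simp
qed

lemma core_poly:
  fixes n N :: nat and m :: "nat \<Rightarrow> nat" and x z :: "nat \<Rightarrow> complex"
  assumes msum: "(\<Sum>i\<in>{1..n}. m i) = 2*N"
    and zinj: "inj_on z {1..N}"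
    and xz: "\<And>i k. i\<in>{1..n} \<Longrightarrow> k\<in>{1..N} \<Longrightarrow> x i \<noteq> z k"
  defines "Pf \<equiv> (\<lambda>u. \<Prod>i\<in>{1..n}. (u - x i)^(m i))"
    and "Qf \<equiv> (\<lambda>u. \<Prod>s\<in>{1..N}. (u - z s))"
    and "Qrf \<equiv> (\<lambda>r u. \<Prod>s\<in>{1..N}-{r}. (u - z s))"
    and "LP \<equiv> (\<lambda>u. \<Sum>i\<in>{1..n}. of_nat (m i)/(u - x i))"
    and "LQr \<equiv> (\<lambda>r u. \<Sum>s\<in>{1..N}-{r}. 1/(u - z s))"
  shows "\<And>u. Pf u = Qf u * Qf u + (\<Sum>s\<in>{1..N}. Qrf s u * Qrf s u *
           (Pf (z s) / (Qrf s (z s))^2 + (Pf (z s) / (Qrf s (z s))^2) * (LP (z s) - 2 * LQr s (z s)) * (u - z s)))"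
proof -
  define Pp where "Pp = (\<Prod>i\<in>{1..n}. [:-x i,1:]^(m i))"
  define Qp where "Qp = (\<Prod>s\<in>{1..N}. [:-z s,1:])"
  define Qrp where "Qrp r = (\<Prod>s\<in>{1..N}-{r}. [:-z s,1:])" for r
  have polyP: "poly Pp u = Pf u" for u unfolding Pp_def Pf_def by (simp add: poly_prod)
  have polyQ: "poly Qp u = Qf u" for u unfolding Qp_def Qf_def by (simp add: poly_prod)
  have polyQr: "poly (Qrp r) u = Qrf r u" for r u unfolding Qrp_def Qrf_def by (simp add: poly_prod)
  have dP: "(Pf has_field_derivative Pf u * LP u) (at u)" if "\<forall>i\<in>{1..n}. u \<noteq> x i" for u
    unfolding Pf_def LP_def
  proof (rule DERIV_prod_logd)
    fix i assume i: "i \<in> {1..n}"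
    have "((\<lambda>t. (t - x i)^(m i)) has_field_derivative (u - x i)^(m i) * (of_nat (m i) * 1/(u - x i))) (at u)"
      using that i by (intro DERIV_pow_logd) (auto intro!: derivative_eq_intros)
    then show "((\<lambda>t. (t - x i)^(m i)) has_field_derivative (u - x i)^(m i) * (of_nat (m i)/(u - x i))) (at u)" by simp
  qed simp
  have dQr: "(Qrf r has_field_derivative Qrf r u * LQr r u) (at u)" if "\<forall>s\<in>{1..N}-{r}. u \<noteq> z s" for r u
    unfolding Qrf_def LQr_def
  proof (rule DERIV_prod_logd)
    fix s assume s: "s \<in> {1..N}-{r}"
    have "((\<lambda>t. (t - z s)) has_field_derivative 1) (at u)"
      by (auto intro!: derivative_eq_intros)
    then show "((\<lambda>t. (t - z s)) has_field_derivative (u - z s) * (1/(u - z s))) (at u)"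
      using that s by simp
  qed simp
  have pdP: "poly (pderiv Pp) u = Pf u * LP u" if "\<forall>i\<in>{1..n}. u \<noteq> x i" for u
  proof -
    have "(Pf has_field_derivative poly (pderiv Pp) u) (at u)"
      using poly_DERIV[of Pp u] by (simp add: polyP[abs_def])
    then show ?thesis using dP[OF that] DERIV_unique by blast
  qed
  have pdQr: "poly (pderiv (Qrp r)) u = Qrf r u * LQr r u" if "\<forall>s\<in>{1..N}-{r}. u \<noteq> z s" for r u
  proof -
    have "(Qrf r has_field_derivative poly (pderiv (Qrp r)) u) (at u)"
      using poly_DERIV[of "Qrp r" u] by (simp add: polyQr[abs_def])
    then show ?thesis using dQr[OF that] DERIV_unique by blast
  qed
  define c where "c r = Pf (z r) / (Qrf r (z r))^2" for r
  define d where "d r = c r * (LP (z r) - 2 * LQr r (z r))" for r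
  define T where "T = Pp - Qp * Qp - (\<Sum>s\<in>{1..N}. Qrp s * Qrp s * [:c s - d s * z s, d s:])"
  have zne: "z r \<noteq> z s" if "r \<in> {1..N}" "s \<in> {1..N}" "s \<noteq> r" for r s
    using that zinj inj_onD by metis
  have Qrz0: "Qrf r (z r) \<noteq> 0" if "r \<in> {1..N}" for r
  proof -
    have "\<forall>s\<in>{1..N}-{r}. z r - z s \<noteq> 0" using zne that by auto
    then show ?thesis unfolding Qrf_def by (subst prod_zero_iff) auto
  qed
  have Qrzs: "Qrf s (z r) = 0" if "r \<in> {1..N}" "s \<in> {1..N}" "s \<noteq> r" for r s
  proof -
    have "r \<in> {1..N} - {s}" using that by auto
    then show ?thesis unfolding Qrf_def by (intro prod_zero bexI[of _ r]) auto
  qed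
  have Qz: "Qf (z r) = 0" if "r \<in> {1..N}" for r
    unfolding Qf_def using that by (intro prod_zero bexI[of _ r]) auto
  have roots: "poly T (z r) = 0 \<and> poly (pderiv T) (z r) = 0" if r: "r \<in> {1..N}" for r
  proof
    have "poly T (z r) = Pf (z r) - Qf (z r) * Qf (z r) -
        (\<Sum>s\<in>{1..N}. Qrf s (z r) * Qrf s (z r) * (c s - d s * z s + z r * d s))"
      unfolding T_def by (simp add: polyP polyQ polyQr poly_sum) (auto intro!: sum.cong simp: algebra_simps)
    also have "(\<Sum>s\<in>{1..N}. Qrf s (z r) * Qrf s (z r) * (c s - d s * z s + z r * d s))
        = Qrf r (z r) * Qrf r (z r) * (c r - d r * z r + z r * d r)"
      using r Qrzs by (intro sum_single) auto
    finally show "poly T (z r) = 0" using Qz[OF r] Qrz0[OF r]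
      by (simp add: c_def power2_eq_square)
    have nx: "\<forall>i\<in>{1..n}. z r \<noteq> x i" using xz r by force
    have nz: "\<forall>s\<in>{1..N}-{r}. z r \<noteq> z s" using zne r by auto
    have "pderiv T = pderiv Pp - (Qp * pderiv Qp + Qp * pderiv Qp) -
        (\<Sum>s\<in>{1..N}. Qrp s * Qrp s * [:d s:] + [:c s - d s * z s, d s:] * (Qrp s * pderiv (Qrp s) + Qrp s * pderiv (Qrp s)))"
      unfolding T_def pderiv_diff pderiv_sum' pderiv_mult by (simp add: pderiv_pCons)
    then have "poly (pderiv T) (z r) = Pf (z r) * LP (z r) - 0 -
        (\<Sum>s\<in>{1..N}. Qrf s (z r) * Qrf s (z r) * d s + (c s - d s * z s + z r * d s) * (Qrf s (z r) * poly (pderiv (Qrp s)) (z r) + Qrf s (z r) * poly (pderiv (Qrp s)) (z r)))"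
      using Qz[OF r] pdP[OF nx] by (simp add: polyP polyQ polyQr poly_sum) (auto intro!: sum.cong simp: algebra_simps)
    also have "(\<Sum>s\<in>{1..N}. Qrf s (z r) * Qrf s (z r) * d s + (c s - d s * z s + z r * d s) * (Qrf s (z r) * poly (pderiv (Qrp s)) (z r) + Qrf s (z r) * poly (pderiv (Qrp s)) (z r)))
        = Qrf r (z r) * Qrf r (z r) * d r + (c r - d r * z r + z r * d r) * (Qrf r (z r) * poly (pderiv (Qrp r)) (z r) + Qrf r (z r) * poly (pderiv (Qrp r)) (z r))"
      using r Qrzs by (intro sum_single) auto
    finally show "poly (pderiv T) (z r) = 0" using Qrz0[OF r] pdQr[OF nz]
      by (simp add: c_def d_def power2_eq_square field_simps)
  qed
  have dvdT: "(\<Prod>s\<in>{1..N}. [:-z s,1:]^2) dvd T"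
    using zinj roots by (intro prod_sq_dvd) auto
  have lin0: "[:- a, 1:] \<noteq> (0::complex poly)" for a by simp
  have Pdeg: "degree Pp = 2*N" unfolding Pp_def
    using msum by (subst degree_prod_eq_sum_degree) (auto simp: degree_linear_power)
  have Plc: "lead_coeff Pp = 1" unfolding Pp_def by (simp add: lead_coeff_prod lead_coeff_power)
  have Qdeg: "degree Qp = N" unfolding Qp_def
    by (subst degree_prod_eq_sum_degree) auto
  have Qlc: "lead_coeff Qp = 1" unfolding Qp_def by (simp add: lead_coeff_prod)
  have Qne: "Qp \<noteq> 0" using Qlc by auto
  have QQdeg: "degree (Qp * Qp) = 2*N" using Qne Qdeg by (simp add: degree_mult_eq)
  have QQlc: "lead_coeff (Qp * Qp) = 1" using Qlc by (simp add: lead_coeff_mult)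
  have Qrdeg: "degree (Qrp s) = N - 1" if "s \<in> {1..N}" for s
  proof -
    have "degree (Qrp s) = card ({1..N} - {s})" unfolding Qrp_def
      by (subst degree_prod_eq_sum_degree) auto
    then show ?thesis using that by simp
  qed
  have termdeg: "degree (Qrp s * Qrp s * [:c s - d s * z s, d s:]) < 2*N" if "s \<in> {1..N}" for s
  proof -
    have "degree (Qrp s * Qrp s * [:c s - d s * z s, d s:]) \<le> degree (Qrp s * Qrp s) + degree [:c s - d s * z s, d s:]"
      by (rule degree_mult_le)
    also have "\<dots> \<le> (degree (Qrp s) + degree (Qrp s)) + 1"
      by (intro add_mono degree_mult_le) auto
    finally have "degree (Qrp s * Qrp s * [:c s - d s * z s, d s:]) \<le> (N - 1) + (N - 1) + 1"
      using Qrdeg[OF that] by simp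
    moreover have "N \<ge> 1" using that by simp
    ultimately show ?thesis by linarith
  qed
  have coefT: "coeff T k = 0" if "k \<ge> 2*N" for k
  proof -
    have cP: "coeff Pp k = (if k = 2*N then 1 else 0)"
      using Pdeg Plc that by (auto intro: coeff_eq_0)
    have cQ: "coeff (Qp * Qp) k = (if k = 2*N then 1 else 0)"
      using QQdeg QQlc that by (auto intro: coeff_eq_0)
    have "(\<Sum>s\<in>{1..N}. coeff (Qrp s * Qrp s * [:c s - d s * z s, d s:]) k) = 0"
      using termdeg that by (intro sum.neutral ballI coeff_eq_0) (auto intro: less_le_trans)
    then show ?thesis unfolding T_def by (simp add: coeff_sum cP cQ)
  qed
  have T0: "T = 0"
  proof (rule ccontr)
    assume "T \<noteq> 0"
    then have "degree (\<Prod>s\<in>{1..N}. [:-z s,1:]^2) \<le> degree T" using dvdT by (rule dvd_imp_degree_le[rotated])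
    moreover have "degree (\<Prod>s\<in>{1..N}. [:-z s,1:]^2) = 2*N"
      by (subst degree_prod_eq_sum_degree) (auto simp: degree_linear_power)
    ultimately have "coeff T (degree T) = 0" using coefT by simp
    then show False using \<open>T \<noteq> 0\<close> by simp
  qed
  show "\<And>u. Pf u = Qf u * Qf u + (\<Sum>s\<in>{1..N}. Qrf s u * Qrf s u *
           (Pf (z s) / (Qrf s (z s))^2 + (Pf (z s) / (Qrf s (z s))^2) * (LP (z s) - 2 * LQr s (z s)) * (u - z s)))"
  proof -
    fix u
    have "poly T u = 0" using T0 by simp
    then have "Pf u - Qf u * Qf u - (\<Sum>s\<in>{1..N}. Qrf s u * Qrf s u * (c s - d s * z s + u * d s)) = 0"
      unfolding T_def by (simp add: polyP polyQ polyQr poly_sum) (auto intro!: sum.cong simp: algebra_simps)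
    moreover have "(\<Sum>s\<in>{1..N}. Qrf s u * Qrf s u * (c s - d s * z s + u * d s)) =
       (\<Sum>s\<in>{1..N}. Qrf s u * Qrf s u *
           (Pf (z s) / (Qrf s (z s))^2 + (Pf (z s) / (Qrf s (z s))^2) * (LP (z s) - 2 * LQr s (z s)) * (u - z s)))"
      by (intro sum.cong refl) (simp only: c_def[symmetric], simp add: d_def algebra_simps)
    ultimately show "Pf u = Qf u * Qf u + (\<Sum>s\<in>{1..N}. Qrf s u * Qrf s u *
           (Pf (z s) / (Qrf s (z s))^2 + (Pf (z s) / (Qrf s (z s))^2) * (LP (z s) - 2 * LQr s (z s)) * (u - z s)))"
      by (simp add: algebra_simps)
  qed
qed

lemma aux_pf:
  fixes q e c d :: complex
  assumes "q \<noteq> 0" "e \<noteq> 0"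
  shows "q * q * (c + d * e) / (e * q)^2 = c / e^2 + d / e"
  using assms by (simp add: field_simps power2_eq_square)

lemma aux_d:
  fixes e c d :: complex
  assumes "e \<noteq> 0"
  shows "- (c * (of_nat 2 * e ^ (2 - 1) * 1)) / (e^2 * e^2) - d * 1 / (e * e) = - (2 * c) / e^3 - d / e^2"
  using assms by (simp add: field_simps power2_eq_square power3_eq_cube)

lemma aux_fin:
  fixes A B q q0 e L :: complex
  assumes "B \<noteq> 0" "q0 \<noteq> 0" "e \<noteq> 0"
  shows "- (A / B * (q^2 / q0^2)) * (L - 2 / (- e)) = - ((e * q)^2 / B) * ((A / q0^2 * L) / e^2 + 2 * (A / q0^2) / e^3)"
  using assms by (simp add: field_simps power2_eq_square power3_eq_cube)

lemma core:
  fixes n N :: nat and m :: "nat \<Rightarrow> nat" and x z :: "nat \<Rightarrow> complex" and w :: complex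
  assumes msum: "(\<Sum>i\<in>{1..n}. m i) = 2*N"
    and zinj: "inj_on z {1..N}"
    and xz: "\<And>i k. i\<in>{1..n} \<Longrightarrow> k\<in>{1..N} \<Longrightarrow> x i \<noteq> z k"
    and xw: "\<And>i. i\<in>{1..n} \<Longrightarrow> x i \<noteq> w"
    and zw: "\<And>k. k\<in>{1..N} \<Longrightarrow> z k \<noteq> w"
  shows "(\<Sum>r\<in>{1..N}. (- ((\<Prod>i\<in>{1..n}. ((z r - x i)/(w - x i))^(m i)) * (\<Prod>s\<in>{1..N}-{r}. ((w - z s)/(z r - z s))^2)))
            * ((\<Sum>i\<in>{1..n}. of_nat (m i)/(z r - x i)) - (\<Sum>s\<in>{1..N}-{r}. 2/(z r - z s)) - 2/(z r - w)))
       = (\<Sum>i\<in>{1..n}. of_nat (m i)/(w - x i)) - (\<Sum>k\<in>{1..N}. 2/(w - z k))"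
proof -
  define Pf where "Pf = (\<lambda>u. \<Prod>i\<in>{1..n}. (u - x i)^(m i))"
  define Qf where "Qf = (\<lambda>u. \<Prod>s\<in>{1..N}. (u - z s))"
  define Qrf where "Qrf = (\<lambda>r u. \<Prod>s\<in>{1..N}-{r}. (u - z s))"
  define LP where "LP = (\<lambda>u. \<Sum>i\<in>{1..n}. of_nat (m i)/(u - x i))"
  define LQ where "LQ = (\<lambda>u. \<Sum>s\<in>{1..N}. 1/(u - z s))"
  define LQr where "LQr = (\<lambda>r u. \<Sum>s\<in>{1..N}-{r}. 1/(u - z s))"
  define c where "c r = Pf (z r) / (Qrf r (z r))^2" for r
  define d where "d r = c r * (LP (z r) - 2 * LQr r (z r))" for r
  have PF: "Pf u = Qf u * Qf u + (\<Sum>s\<in>{1..N}. Qrf s u * Qrf s u * (c s + d s * (u - z s)))" for u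
    unfolding c_def d_def Pf_def Qf_def Qrf_def LP_def LQr_def by (rule core_poly[OF msum zinj xz])
  have Qrem: "Qf u = (u - z s) * Qrf s u" if "s \<in> {1..N}" for s u
    unfolding Qf_def Qrf_def using that by (simp add: prod.remove)
  have Qne: "Qf u \<noteq> 0" if "u \<notin> z ` {1..N}" for u
    unfolding Qf_def using that by (subst prod_zero_iff) auto
  have Pne: "Pf u \<noteq> 0" if "\<forall>i\<in>{1..n}. u \<noteq> x i" for u
    unfolding Pf_def using that by (subst prod_zero_iff) auto
  define Rr where "Rr = (\<lambda>u. 1 + (\<Sum>s\<in>{1..N}. c s / (u - z s)^2 + d s / (u - z s)))"
  define V where "V = - (z ` {1..N})"
  have oV: "open V" unfolding V_def by (intro open_Compl finite_imp_closed) auto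
  have wz: "w \<notin> z ` {1..N}" using zw by blast
  then have wV: "w \<in> V" unfolding V_def by simp
  have RV: "Pf u / (Qf u)^2 = Rr u" if "u \<in> V" for u
  proof -
    have u: "u \<notin> z ` {1..N}" using that unfolding V_def by auto
    have "Pf u / (Qf u)^2 = 1 + (\<Sum>s\<in>{1..N}. Qrf s u * Qrf s u * (c s + d s * (u - z s)) / (Qf u)^2)"
      using Qne[OF u] by (simp add: PF add_divide_distrib sum_divide_distrib power2_eq_square)
    also have "(\<Sum>s\<in>{1..N}. Qrf s u * Qrf s u * (c s + d s * (u - z s)) / (Qf u)^2)
        = (\<Sum>s\<in>{1..N}. c s / (u - z s)^2 + d s / (u - z s))"
    proof (intro sum.cong refl)
      fix s assume s: "s \<in> {1..N}"
      have us: "u - z s \<noteq> 0" using u s by auto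
      have "Qrf s u \<noteq> 0" using Qne[OF u] Qrem[OF s, of u] by auto
      then show "Qrf s u * Qrf s u * (c s + d s * (u - z s)) / (Qf u)^2 = c s / (u - z s)^2 + d s / (u - z s)"
        using us unfolding Qrem[OF s] by (rule aux_pf)
    qed
    finally show ?thesis unfolding Rr_def .
  qed
  have wx: "\<forall>i\<in>{1..n}. w \<noteq> x i" using xw by force
  have dP: "(Pf has_field_derivative Pf w * LP w) (at w)"
    unfolding Pf_def LP_def
  proof (rule DERIV_prod_logd)
    fix i assume i: "i \<in> {1..n}"
    have "((\<lambda>t. (t - x i)^(m i)) has_field_derivative (w - x i)^(m i) * (of_nat (m i) * 1/(w - x i))) (at w)"
      using wx i by (intro DERIV_pow_logd) (auto intro!: derivative_eq_intros)
    then show "((\<lambda>t. (t - x i)^(m i)) has_field_derivative (w - x i)^(m i) * (of_nat (m i)/(w - x i))) (at w)" by simp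
  qed simp
  have dQ: "(Qf has_field_derivative Qf w * LQ w) (at w)"
    unfolding Qf_def LQ_def
  proof (rule DERIV_prod_logd)
    fix s assume s: "s \<in> {1..N}"
    have "((\<lambda>t. (t - z s)) has_field_derivative 1) (at w)"
      by (auto intro!: derivative_eq_intros)
    moreover have "w - z s \<noteq> 0" using zw s by force
    ultimately show "((\<lambda>t. (t - z s)) has_field_derivative (w - z s) * (1/(w - z s))) (at w)"
      by simp
  qed simp
  have Qw: "Qf w \<noteq> 0" using Qne[OF wz] .
  have Pw: "Pf w \<noteq> 0" using Pne[OF wx] .
  have dQ2: "((\<lambda>u. (Qf u)^2) has_field_derivative (Qf w)^2 * (of_nat 2 * (Qf w * LQ w) / Qf w)) (at w)"
    using dQ Qw by (rule DERIV_pow_logd)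
  have dR0: "((\<lambda>u. Pf u / (Qf u)^2) has_field_derivative
      ((Pf w * LP w) * (Qf w)^2 - Pf w * ((Qf w)^2 * (of_nat 2 * (Qf w * LQ w) / Qf w))) / ((Qf w)^2 * (Qf w)^2)) (at w)"
    using dP dQ2 Qw by (intro DERIV_divide) auto
  have dR: "((\<lambda>u. Pf u / (Qf u)^2) has_field_derivative Pf w * (LP w - 2 * LQ w) / (Qf w)^2) (at w)"
  proof -
    have "((Pf w * LP w) * (Qf w)^2 - Pf w * ((Qf w)^2 * (of_nat 2 * (Qf w * LQ w) / Qf w))) / ((Qf w)^2 * (Qf w)^2)
        = Pf w * (LP w - 2 * LQ w) / (Qf w)^2"
      using Qw by (simp add: field_simps power2_eq_square)
    then show ?thesis using dR0 by simp
  qed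
  have dterm: "((\<lambda>u. c s / (u - z s)^2 + d s / (u - z s)) has_field_derivative
       - (2 * c s) / (w - z s)^3 - d s / (w - z s)^2) (at w)" if s: "s \<in> {1..N}" for s
  proof -
    have ws: "w - z s \<noteq> 0" using zw s by auto
    have "((\<lambda>u. c s / (u - z s)^2 + d s / (u - z s)) has_field_derivative
       - (c s * (of_nat 2 * (w - z s) ^ (2 - 1) * 1)) / ((w - z s)^2 * (w - z s)^2) - d s * 1 / ((w - z s) * (w - z s))) (at w)"
      using ws by (auto intro!: derivative_eq_intros)
    moreover have "- (c s * (of_nat 2 * (w - z s) ^ (2 - 1) * 1)) / ((w - z s)^2 * (w - z s)^2) - d s * 1 / ((w - z s) * (w - z s))
        = - (2 * c s) / (w - z s)^3 - d s / (w - z s)^2"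
      using ws by (rule aux_d)
    ultimately show ?thesis by simp
  qed
  have dRr: "(Rr has_field_derivative (\<Sum>s\<in>{1..N}. - (2 * c s) / (w - z s)^3 - d s / (w - z s)^2)) (at w)"
  proof -
    have "((\<lambda>u. 1 + (\<Sum>s\<in>{1..N}. c s / (u - z s)^2 + d s / (u - z s))) has_field_derivative
        0 + (\<Sum>s\<in>{1..N}. - (2 * c s) / (w - z s)^3 - d s / (w - z s)^2)) (at w)"
      using dterm by (intro DERIV_add DERIV_sum) auto
    then show ?thesis unfolding Rr_def by simp
  qed
  have dR2: "((\<lambda>u. Pf u / (Qf u)^2) has_field_derivative (\<Sum>s\<in>{1..N}. - (2 * c s) / (w - z s)^3 - d s / (w - z s)^2)) (at w)"
    using dRr oV wV by (rule has_field_derivative_transform_within_open) (simp add: RV)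
  have E: "Pf w * (LP w - 2 * LQ w) / (Qf w)^2 = (\<Sum>s\<in>{1..N}. - (2 * c s) / (w - z s)^3 - d s / (w - z s)^2)"
    using dR dR2 by (rule DERIV_unique)
  have summand: "(- ((\<Prod>i\<in>{1..n}. ((z r - x i)/(w - x i))^(m i)) * (\<Prod>s\<in>{1..N}-{r}. ((w - z s)/(z r - z s))^2)))
            * ((\<Sum>i\<in>{1..n}. of_nat (m i)/(z r - x i)) - (\<Sum>s\<in>{1..N}-{r}. 2/(z r - z s)) - 2/(z r - w))
      = - ((Qf w)^2 / Pf w) * (d r / (w - z r)^2 + 2 * c r / (w - z r)^3)" if r: "r \<in> {1..N}" for r
  proof -
    have G1: "(\<Prod>i\<in>{1..n}. ((z r - x i)/(w - x i))^(m i)) = Pf (z r) / Pf w"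
      unfolding Pf_def by (simp add: power_divide prod_dividef)
    have G2: "(\<Prod>s\<in>{1..N}-{r}. ((w - z s)/(z r - z s))^2) = (Qrf r w)^2 / (Qrf r (z r))^2"
      unfolding Qrf_def by (simp add: power_divide prod_dividef prod_power_distrib)
    have S2: "(\<Sum>s\<in>{1..N}-{r}. 2/(z r - z s)) = 2 * LQr r (z r)"
      unfolding LQr_def by (simp add: sum_distrib_left)
    have LPz: "(\<Sum>i\<in>{1..n}. of_nat (m i)/(z r - x i)) = LP (z r)" unfolding LP_def by simp
    have q0: "Qrf r (z r) \<noteq> 0"
    proof -
      have "\<forall>s\<in>{1..N}-{r}. z r - z s \<noteq> 0" using zinj r by (auto dest: inj_onD)
      then show ?thesis unfolding Qrf_def by (subst prod_zero_iff) auto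
    qed
    have e: "w - z r \<noteq> 0" using zw r by force
    have zrw: "z r - w = - (w - z r)" by simp
    show ?thesis unfolding G1 G2 S2 LPz zrw Qrem[OF r, of w] d_def c_def
      using Pw q0 e by (rule aux_fin)
  qed
  have "(\<Sum>r\<in>{1..N}. (- ((\<Prod>i\<in>{1..n}. ((z r - x i)/(w - x i))^(m i)) * (\<Prod>s\<in>{1..N}-{r}. ((w - z s)/(z r - z s))^2)))
            * ((\<Sum>i\<in>{1..n}. of_nat (m i)/(z r - x i)) - (\<Sum>s\<in>{1..N}-{r}. 2/(z r - z s)) - 2/(z r - w)))
      = (\<Sum>r\<in>{1..N}. - ((Qf w)^2 / Pf w) * (d r / (w - z r)^2 + 2 * c r / (w - z r)^3))"
    using summand by (rule sum.cong[OF refl])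
  also have "\<dots> = ((Qf w)^2 / Pf w) * (\<Sum>r\<in>{1..N}. - (2 * c r) / (w - z r)^3 - d r / (w - z r)^2)"
    unfolding sum_distrib_left by (intro sum.cong refl) (simp add: algebra_simps)
  also have "\<dots> = ((Qf w)^2 / Pf w) * (Pf w * (LP w - 2 * LQ w) / (Qf w)^2)" by (simp add: E)
  also have "\<dots> = LP w - 2 * LQ w" using Pw Qw by (simp add: field_simps)
  also have "\<dots> = (\<Sum>i\<in>{1..n}. of_nat (m i)/(w - x i)) - (\<Sum>k\<in>{1..N}. 2/(w - z k))"
    unfolding LP_def LQ_def by (simp add: sum_distrib_left)
  finally show ?thesis .
qed

lemma log_deriv:
  fixes L h :: "complex \<Rightarrow> complex"
  assumes S: "open S" "t0 \<in> S" and cL: "continuous_on S L"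
    and eq: "\<And>t. t \<in> S \<Longrightarrow> exp (L t) = h t"
    and dh: "(h has_field_derivative h') (at t0)" and h0: "h t0 \<noteq> 0"
  shows "(L has_field_derivative h' / h t0) (at t0)"
proof -
  define V where "V = S \<inter> L -` ball (L t0) pi"
  have "\<forall>B. open B \<longrightarrow> open (S \<inter> L -` B)" using continuous_on_open_vimage[OF S(1), THEN iffD1, OF cL] by (simp add: Int_commute)
  then have oV: "open V" unfolding V_def by simp
  have t0V: "t0 \<in> V" unfolding V_def using S by simp
  have d1: "((\<lambda>t. L t0 + Ln (h t / h t0)) has_field_derivative h' / h t0) (at t0)"
  proof -
    have A: "((\<lambda>t. h t / h t0) has_field_derivative h' / h t0) (at t0)"
      using dh h0 by (auto intro!: derivative_eq_intros)
    have B: "(Ln has_field_derivative inverse (h t0 / h t0)) (at (h t0 / h t0))"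
      using h0 by (intro has_field_derivative_Ln) simp
    have "((\<lambda>t. Ln (h t / h t0)) has_field_derivative inverse (h t0 / h t0) * (h' / h t0)) (at t0)"
      using DERIV_chain2[OF B A] by simp
    then have "((\<lambda>t. L t0 + Ln (h t / h t0)) has_field_derivative 0 + inverse (h t0 / h t0) * (h' / h t0)) (at t0)"
      by (rule DERIV_add[OF DERIV_const])
    then show ?thesis using h0 by simp
  qed
  show ?thesis
  proof (rule has_field_derivative_transform_within_open[OF d1 oV t0V])
    fix t assume tV: "t \<in> V"
    then have tS: "t \<in> S" and d0: "dist (L t0) (L t) < pi" unfolding V_def by auto
    have d: "cmod (L t - L t0) < pi" using d0 by (simp add: dist_norm norm_minus_commute)
    have "\<bar>Im (L t - L t0)\<bar> < pi" using abs_Im_le_cmod[of "L t - L t0"] d by linarith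
    then have "Ln (exp (L t - L t0)) = L t - L t0" by (intro Ln_exp) auto
    moreover have "exp (L t - L t0) = h t / h t0" using eq[OF tS] eq[OF S(2)] by (simp add: exp_diff)
    ultimately show "L t0 + Ln (h t / h t0) = L t" by simp
  qed
qed

lemma slice_log:
  fixes L A :: "cpoint \<Rightarrow> complex" and \<phi> :: "complex \<Rightarrow> cpoint"
  assumes U: "open U" and c\<phi>: "continuous_on UNIV \<phi>" and t0: "\<phi> t0 \<in> U"
    and cL: "continuous_on U L" and eq: "\<And>p. p \<in> U \<Longrightarrow> exp (L p) = A p"
    and dA: "((\<lambda>t. A (\<phi> t)) has_field_derivative h') (at t0)" and A0: "A (\<phi> t0) \<noteq> 0"
  shows "((\<lambda>t. L (\<phi> t)) has_field_derivative h' / A (\<phi> t0)) (at t0)"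
proof -
  have oS: "open (\<phi> -` U)" using continuous_on_open_vimage[of UNIV \<phi>, THEN iffD1, OF open_UNIV c\<phi>] U by simp
  have cS: "continuous_on (\<phi> -` U) (\<lambda>t. L (\<phi> t))"
    by (rule continuous_on_compose2[OF cL continuous_on_subset[OF c\<phi>]]) auto
  show ?thesis
    using log_deriv[OF oS _ cS, of t0 "\<lambda>t. A (\<phi> t)" h'] t0 eq dA A0 by auto
qed

lemma slice_exp:
  fixes E f :: "cpoint \<Rightarrow> complex" and \<phi> :: "complex \<Rightarrow> cpoint"
  assumes U: "open U" and c\<phi>: "continuous_on UNIV \<phi>" and t0: "\<phi> t0 \<in> U"
    and eq: "\<And>p. p \<in> U \<Longrightarrow> f p = exp (E p)"
    and dE: "((\<lambda>t. E (\<phi> t)) has_field_derivative D) (at t0)"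
  shows "((\<lambda>t. f (\<phi> t)) has_field_derivative f (\<phi> t0) * D) (at t0)"
proof -
  have oS: "open (\<phi> -` U)" using continuous_on_open_vimage[of UNIV \<phi>, THEN iffD1, OF open_UNIV c\<phi>] U by simp
  have "((\<lambda>t. exp (E (\<phi> t))) has_field_derivative exp (E (\<phi> t0)) * D) (at t0)"
    using dE by (auto intro!: derivative_eq_intros)
  then have "((\<lambda>t. exp (E (\<phi> t))) has_field_derivative f (\<phi> t0) * D) (at t0)"
    using eq[OF t0] by simp
  then show ?thesis
    by (rule has_field_derivative_transform_within_open[OF _ oS]) (use t0 eq in auto)
qed

lemma cont_upd: "continuous_on UNIV (\<lambda>t::complex. (w::complex, x::nat\<Rightarrow>complex, z(r := t)))"
proof -
  have c: "continuous_on UNIV (\<lambda>t::complex. z(r := t))"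
  proof (rule continuous_on_coordinatewise_then_product)
    fix i
    show "continuous_on UNIV (\<lambda>t. (z(r := t)) i)"
      by (cases "i = r") (auto intro: continuous_intros)
  qed
  show ?thesis by (rule continuous_on_Pair[OF continuous_on_const continuous_on_Pair[OF continuous_on_const c]])
qed

lemma cont_w: "continuous_on UNIV (\<lambda>t::complex. (t, x::nat\<Rightarrow>complex, z::nat\<Rightarrow>complex))"
  by (intro continuous_intros)

lemma d_upd: "((\<lambda>t. (z(r := t)) k) has_field_derivative (if k = r then 1 else 0)) (at t0)"
  by (cases "k = r") (auto intro!: derivative_eq_intros)

lemma pair_sum:
  fixes z :: "nat \<Rightarrow> complex" and C :: complex
  assumes r: "r \<in> {1..N}"
  shows "(\<Sum>s\<in>{1..N}. \<Sum>q\<in>{1..<s}. C * (((if s = r then 1 else 0) - (if q = r then 1 else 0)) / (z s - z q)))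
       = C * (\<Sum>k\<in>{1..N}-{r}. 1 / (z r - z k))"
proof -
  have A: "(\<Sum>s\<in>{1..N}. \<Sum>q\<in>{1..<s}. (if s = r then 1 else 0) / (z s - z q)) = (\<Sum>k\<in>{1..<r}. 1 / (z r - z k))"
  proof -
    have "(\<Sum>s\<in>{1..N}. \<Sum>q\<in>{1..<s}. (if s = r then 1 else 0) / (z s - z q)) = (\<Sum>q\<in>{1..<r}. (if r = r then 1 else 0) / (z r - z q))"
      using r by (intro sum_single) auto
    then show ?thesis by simp
  qed
  have B: "(\<Sum>s\<in>{1..N}. \<Sum>q\<in>{1..<s}. (if q = r then 1 else 0) / (z s - z q)) = (\<Sum>k\<in>{r<..N}. 1 / (z k - z r))"
  proof -
    have inner: "(\<Sum>q\<in>{1..<s}. (if q = r then 1 else 0) / (z s - z q)) = (if s \<in> {r<..N} then 1 / (z s - z r) else 0)"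
      if s: "s \<in> {1..N}" for s
    proof (cases "r < s")
      case True
      then have "(\<Sum>q\<in>{1..<s}. (if q = r then 1 else 0) / (z s - z q)) = (if r = r then 1 else 0) / (z s - z r)"
        using r by (intro sum_single) auto
      then show ?thesis using True s by simp
    next
      case False
      then show ?thesis by (intro trans[OF sum.neutral]) auto
    qed
    have "(\<Sum>s\<in>{1..N}. \<Sum>q\<in>{1..<s}. (if q = r then 1 else 0) / (z s - z q))
        = (\<Sum>s\<in>{1..N}. (if s \<in> {r<..N} then 1 / (z s - z r) else 0))"
      using inner by (rule sum.cong[OF refl])
    also have "\<dots> = (\<Sum>s\<in>{1..N} \<inter> {r<..N}. 1 / (z s - z r))"
      by (simp add: sum.inter_restrict)
    also have "{1..N} \<inter> {r<..N} = {r<..N}" using r by auto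
    finally show ?thesis .
  qed
  have split: "{1..N} - {r} = {1..<r} \<union> {r<..N}" using r by auto
  have "(\<Sum>s\<in>{1..N}. \<Sum>q\<in>{1..<s}. C * (((if s = r then 1 else 0) - (if q = r then 1 else 0)) / (z s - z q)))
      = C * ((\<Sum>s\<in>{1..N}. \<Sum>q\<in>{1..<s}. (if s = r then 1 else 0) / (z s - z q))
           - (\<Sum>s\<in>{1..N}. \<Sum>q\<in>{1..<s}. (if q = r then 1 else 0) / (z s - z q)))"
    by (simp add: sum_distrib_left sum_subtractf diff_divide_distrib right_diff_distrib)
  also have "\<dots> = C * ((\<Sum>k\<in>{1..<r}. 1 / (z r - z k)) + (\<Sum>k\<in>{r<..N}. 1 / (z r - z k)))"
  proof -
    have "(\<Sum>k\<in>{r<..N}. 1 / (z k - z r)) = - (\<Sum>k\<in>{r<..N}. 1 / (z r - z k))"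
      by (simp add: sum_negf[symmetric] minus_divide_right)
    then show ?thesis unfolding A B by simp
  qed
  also have "\<dots> = C * (\<Sum>k\<in>{1..N}-{r}. 1 / (z r - z k))"
    unfolding split by (subst sum.union_disjoint) auto
  finally show ?thesis .
qed

lemma aux_w1: "(2*a-2) * (-1/(p - q)) = (1-a) * (- (2/(q - p)))" for a p q :: complex
  by (cases "p = q") (simp_all add: field_simps)

lemma aux_w2: "2 * c * (1-a) * (-1/(p - q)) = (1-a) * (2 * c / (q - p))" for a c p q :: complex
  by (cases "p = q") (simp_all add: field_simps)

lemma aux_g1: "p \<noteq> 0 \<Longrightarrow> q \<noteq> 0 \<Longrightarrow> of_nat m * (1 / q) / (p / q) = of_nat m / (p::complex)"
  by (simp add: field_simps)

lemma aux_g2: "p \<noteq> 0 \<Longrightarrow> q \<noteq> 0 \<Longrightarrow> of_nat 2 * ((0 * p - q * 1) / (p * p)) / (q / p) = - 2 / (p::complex)"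
  by (simp add: field_simps)

lemma aux_g2': "p \<noteq> 0 \<Longrightarrow> q \<noteq> 0 \<Longrightarrow> of_nat 2 * (- q / p^2) / (q / p) = - 2 / (p::complex)"
  by (simp add: field_simps power2_eq_square)

theorem lemma1:
  fixes n N :: nat and l :: "nat \<Rightarrow> real" and a :: complex
    and U :: "cpoint set" and f :: "cpoint \<Rightarrow> complex"
    and w :: complex and x z :: "nat \<Rightarrow> complex"
  assumes "n \<ge> 1"
    and "\<forall>i\<in>{1..n}. l i > 0 \<and> 2 * l i \<in> \<int>"
    and "(\<Sum>i\<in>{1..n}. l i) = real N"
    and "open U" and "U \<subseteq> config n N"
    and "is_branch n N l a U f"
    and "(w, x, z) \<in> U"
  shows "deriv (\<lambda>t. f (t, x, z)) w =
         (\<Sum>r\<in>{1..N}. deriv (\<lambda>t. g_fun n N l r (w, x, z(r := t)) * f (w, x, z(r := t))) (z r))"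
proof -
  note U = assms(4) and wU = assms(7)
  define m where "m i = nat \<lfloor>2 * l i\<rfloor>" for i
  have mr: "real (m i) = 2 * l i" if "i \<in> {1..n}" for i
  proof -
    have li: "2 * l i \<in> \<int>" "l i > 0" using assms(2) that by auto
    obtain k where k: "2 * l i = of_int k" using li(1) by (elim Ints_cases)
    have "real_of_int k > 0" using li(2) k by linarith
    then have "k > 0" by simp
    then show ?thesis unfolding m_def k by simp
  qed
  have mc: "(of_nat (m i) :: complex) = 2 * of_real (l i)" if "i \<in> {1..n}" for i
  proof -
    have "(of_nat (m i) :: complex) = of_real (real (m i))" by simp
    also have "\<dots> = 2 * of_real (l i)" using mr[OF that] by simp
    finally show ?thesis .
  qed
  have msum: "(\<Sum>i\<in>{1..n}. m i) = 2 * N"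
  proof -
    have "real (\<Sum>i\<in>{1..n}. m i) = (\<Sum>i\<in>{1..n}. 2 * l i)" using mr by simp
    also have "\<dots> = real (2 * N)" using assms(3) by (simp add: sum_distrib_left[symmetric])
    finally show ?thesis by (simp only: of_nat_eq_iff)
  qed
  have cfg: "(w, x, z) \<in> config n N" using assms(5) wU by auto
  have xw: "\<And>i. i \<in> {1..n} \<Longrightarrow> x i \<noteq> w" and zw: "\<And>k. k \<in> {1..N} \<Longrightarrow> z k \<noteq> w"
    and xinj: "inj_on x {1..n}" and zinj: "inj_on z {1..N}"
    and xz: "\<And>i k. i \<in> {1..n} \<Longrightarrow> k \<in> {1..N} \<Longrightarrow> x i \<noteq> z k"
    using cfg unfolding config_def by auto
  obtain Lxx Lzx Lzz Lzw Lxw where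
    cxx: "\<forall>i\<in>{1..n}. \<forall>j\<in>{1..n}. i < j \<longrightarrow> continuous_on U (Lxx i j)" and
    czx: "\<forall>i\<in>{1..n}. \<forall>k\<in>{1..N}. continuous_on U (Lzx i k)" and
    czz: "\<forall>r\<in>{1..N}. \<forall>s\<in>{1..N}. r < s \<longrightarrow> continuous_on U (Lzz r s)" and
    czw: "\<forall>k\<in>{1..N}. continuous_on U (Lzw k 0)" and
    cxw: "\<forall>i\<in>{1..n}. continuous_on U (Lxw i 0)" and
    H: "\<forall>(w, x, z)\<in>U.
          (\<forall>i\<in>{1..n}. \<forall>j\<in>{1..n}. i < j \<longrightarrow> exp (Lxx i j (w, x, z)) = x j - x i) \<and>
          (\<forall>i\<in>{1..n}. \<forall>k\<in>{1..N}. exp (Lzx i k (w, x, z)) = z k - x i) \<and>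
          (\<forall>r\<in>{1..N}. \<forall>s\<in>{1..N}. r < s \<longrightarrow> exp (Lzz r s (w, x, z)) = z s - z r) \<and>
          (\<forall>k\<in>{1..N}. exp (Lzw k 0 (w, x, z)) = z k - w) \<and>
          (\<forall>i\<in>{1..n}. exp (Lxw i 0 (w, x, z)) = x i - w) \<and>
          f (w, x, z) = exp (
              (\<Sum>j\<in>{1..n}. \<Sum>i\<in>{1..<j}. 2 * of_real (l i) * of_real (l j) * a * Lxx i j (w, x, z))
            + (\<Sum>i\<in>{1..n}. \<Sum>k\<in>{1..N}. - 2 * of_real (l i) * a * Lzx i k (w, x, z))
            + (\<Sum>s\<in>{1..N}. \<Sum>r\<in>{1..<s}. 2 * a * Lzz r s (w, x, z))
            + (\<Sum>k\<in>{1..N}. (2 * a - 2) * Lzw k 0 (w, x, z))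
            + (\<Sum>i\<in>{1..n}. 2 * of_real (l i) * (1 - a) * Lxw i 0 (w, x, z)))"
    using assms(6) unfolding is_branch_def
    apply (elim exE conjE)
    apply (rule that)
    apply assumption+
    done
  define E where "E p = (\<Sum>j\<in>{1..n}. \<Sum>i\<in>{1..<j}. 2 * of_real (l i) * of_real (l j) * a * Lxx i j p)
            + (\<Sum>i\<in>{1..n}. \<Sum>k\<in>{1..N}. - 2 * of_real (l i) * a * Lzx i k p)
            + (\<Sum>s\<in>{1..N}. \<Sum>r\<in>{1..<s}. 2 * a * Lzz r s p)
            + (\<Sum>k\<in>{1..N}. (2 * a - 2) * Lzw k 0 p)
            + (\<Sum>i\<in>{1..n}. 2 * of_real (l i) * (1 - a) * Lxw i 0 p)" for p
  have Hp: "(\<forall>i\<in>{1..n}. \<forall>j\<in>{1..n}. i < j \<longrightarrow> exp (Lxx i j p) = fst (snd p) j - fst (snd p) i) \<and>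
          (\<forall>i\<in>{1..n}. \<forall>k\<in>{1..N}. exp (Lzx i k p) = snd (snd p) k - fst (snd p) i) \<and>
          (\<forall>r\<in>{1..N}. \<forall>s\<in>{1..N}. r < s \<longrightarrow> exp (Lzz r s p) = snd (snd p) s - snd (snd p) r) \<and>
          (\<forall>k\<in>{1..N}. exp (Lzw k 0 p) = snd (snd p) k - fst p) \<and>
          (\<forall>i\<in>{1..n}. exp (Lxw i 0 p) = fst (snd p) i - fst p) \<and>
          f p = exp (E p)" if "p \<in> U" for p
  proof -
    obtain pw px pz where p: "p = (pw, px, pz)" by (cases p)
    show ?thesis using bspec[OF H that] unfolding p E_def by simp
  qed
  have eLxx: "exp (Lxx i j p) = fst (snd p) j - fst (snd p) i" if "p\<in>U" "i\<in>{1..n}" "j\<in>{1..n}" "i<j" for i j p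
    using Hp[OF that(1)] that(2-4) by simp
  have eLzx: "exp (Lzx i k p) = snd (snd p) k - fst (snd p) i" if "p\<in>U" "i\<in>{1..n}" "k\<in>{1..N}" for i k p
    using Hp[OF that(1)] that(2-3) by simp
  have eLzz: "exp (Lzz r s p) = snd (snd p) s - snd (snd p) r" if "p\<in>U" "r\<in>{1..N}" "s\<in>{1..N}" "r<s" for r s p
    using Hp[OF that(1)] that(2-4) by simp
  have eLzw: "exp (Lzw k 0 p) = snd (snd p) k - fst p" if "p\<in>U" "k\<in>{1..N}" for k p
    using Hp[OF that(1)] that(2) by simp
  have eLxw: "exp (Lxw i 0 p) = fst (snd p) i - fst p" if "p\<in>U" "i\<in>{1..n}" for i p
    using Hp[OF that(1)] that(2) by simp
  have fE: "f p = exp (E p)" if "p \<in> U" for p using Hp[OF that] by simp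
  have xne: "x j - x i \<noteq> 0" if "i\<in>{1..n}" "j\<in>{1..n}" "i<j" for i j
    using that xinj by (auto dest: inj_onD)
  have zne: "z s - z r \<noteq> 0" if "r\<in>{1..N}" "s\<in>{1..N}" "r \<noteq> s" for r s
    using that zinj by (auto dest: inj_onD)
  have zxne: "z k - x i \<noteq> 0" if "i\<in>{1..n}" "k\<in>{1..N}" for i k
    using xz[OF that] by simp
  have SLw: "((\<lambda>t. L (t,x,z)) has_field_derivative h' / A (w,x,z)) (at w)"
    if "continuous_on U L" "\<And>p. p \<in> U \<Longrightarrow> exp (L p) = A p"
      "((\<lambda>t. A (t,x,z)) has_field_derivative h') (at w)" "A (w,x,z) \<noteq> 0" for L A h'
    using slice_log[OF U cont_w wU that(1,2)] that(3,4) by simp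
  define Dw where "Dw = (\<Sum>j\<in>{1..n}. \<Sum>i\<in>{1..<j}. 2 * of_real (l i) * of_real (l j) * a * (0::complex))
            + (\<Sum>i\<in>{1..n}. \<Sum>k\<in>{1..N}. - 2 * of_real (l i) * a * 0)
            + (\<Sum>s\<in>{1..N}. \<Sum>r\<in>{1..<s}. 2 * a * 0)
            + (\<Sum>k\<in>{1..N}. (2 * a - 2) * (- 1 / (z k - w)))
            + (\<Sum>i\<in>{1..n}. 2 * of_real (l i) * (1 - a) * (- 1 / (x i - w)))"
  have dEw: "((\<lambda>t. E (t,x,z)) has_field_derivative Dw) (at w)"
    unfolding E_def Dw_def
  proof (intro DERIV_add DERIV_sum DERIV_cmult)
    fix j i assume j: "j \<in> {1..n}" and i: "i \<in> {1..<j}"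
    have "((\<lambda>t. Lxx i j (t,x,z)) has_field_derivative 0 / (fst (snd (w,x,z)) j - fst (snd (w,x,z)) i)) (at w)"
      by (rule SLw) (use i j cxx eLxx xne in auto)
    then show "((\<lambda>t. Lxx i j (t,x,z)) has_field_derivative 0) (at w)" by simp
  next
    fix i k assume i: "i \<in> {1..n}" and k: "k \<in> {1..N}"
    have "((\<lambda>t. Lzx i k (t,x,z)) has_field_derivative 0 / (snd (snd (w,x,z)) k - fst (snd (w,x,z)) i)) (at w)"
      by (rule SLw) (use i k czx eLzx zxne in auto)
    then show "((\<lambda>t. Lzx i k (t,x,z)) has_field_derivative 0) (at w)" by simp
  next
    fix s r assume s: "s \<in> {1..N}" and r: "r \<in> {1..<s}"
    have "((\<lambda>t. Lzz r s (t,x,z)) has_field_derivative 0 / (snd (snd (w,x,z)) s - snd (snd (w,x,z)) r)) (at w)"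
      by (rule SLw) (use r s czz eLzz zne in auto)
    then show "((\<lambda>t. Lzz r s (t,x,z)) has_field_derivative 0) (at w)" by simp
  next
    fix k assume k: "k \<in> {1..N}"
    have d: "((\<lambda>t. snd (snd (t,x,z)) k - fst (t,x,z)) has_field_derivative -1) (at w)"
      by (simp, auto intro!: derivative_eq_intros)
    have "((\<lambda>t. Lzw k 0 (t,x,z)) has_field_derivative -1 / (snd (snd (w,x,z)) k - fst (w,x,z))) (at w)"
      by (rule SLw[OF _ _ d]) (use k czw eLzw zw in auto)
    then show "((\<lambda>t. Lzw k 0 (t,x,z)) has_field_derivative - 1 / (z k - w)) (at w)" by simp
  next
    fix i assume i: "i \<in> {1..n}"
    have d: "((\<lambda>t. fst (snd (t,x,z)) i - fst (t,x,z)) has_field_derivative -1) (at w)"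
      by (simp, auto intro!: derivative_eq_intros)
    have "((\<lambda>t. Lxw i 0 (t,x,z)) has_field_derivative -1 / (fst (snd (w,x,z)) i - fst (w,x,z))) (at w)"
      by (rule SLw[OF _ _ d]) (use i cxw eLxw xw in auto)
    then show "((\<lambda>t. Lxw i 0 (t,x,z)) has_field_derivative - 1 / (x i - w)) (at w)" by simp
  qed
  have dfw: "((\<lambda>t. f (t,x,z)) has_field_derivative f (w,x,z) * Dw) (at w)"
    using slice_exp[OF U cont_w wU fE dEw] by simp
  define S1 where "S1 r = (\<Sum>i\<in>{1..n}. of_nat (m i) / (z r - x i))" for r
  define S where "S r = (\<Sum>s\<in>{1..N}-{r}. 1 / (z r - z s))" for r
  define Gc where "Gc r = - ((\<Prod>i\<in>{1..n}. ((z r - x i)/(w - x i))^(m i)) * (\<Prod>s\<in>{1..N}-{r}. ((w - z s)/(z r - z s))^2))" for r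
  define Bc where "Bc r = (\<Sum>i\<in>{1..n}. of_nat (m i)/(z r - x i)) - (\<Sum>s\<in>{1..N}-{r}. 2/(z r - z s)) - 2/(z r - w)" for r
  have core': "(\<Sum>r\<in>{1..N}. Gc r * Bc r) = (\<Sum>i\<in>{1..n}. of_nat (m i)/(w - x i)) - (\<Sum>k\<in>{1..N}. 2/(w - z k))"
    unfolding Gc_def Bc_def by (rule core[OF msum zinj xz xw zw])
  have Dw': "Dw = (1 - a) * ((\<Sum>i\<in>{1..n}. of_nat (m i)/(w - x i)) - (\<Sum>k\<in>{1..N}. 2/(w - z k)))"
  proof -
    have "(\<Sum>k\<in>{1..N}. (2 * a - 2) * (- 1 / (z k - w))) = (1 - a) * (\<Sum>k\<in>{1..N}. - (2/(w - z k)))"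
      unfolding sum_distrib_left by (intro sum.cong refl) (rule aux_w1)
    then have "(\<Sum>k\<in>{1..N}. (2 * a - 2) * (- 1 / (z k - w))) = (1 - a) * (- (\<Sum>k\<in>{1..N}. 2/(w - z k)))"
      by (simp only: sum_negf)
    moreover have "(\<Sum>i\<in>{1..n}. 2 * of_real (l i) * (1 - a) * (- 1 / (x i - w))) = (1 - a) * (\<Sum>i\<in>{1..n}. of_nat (m i)/(w - x i))"
      unfolding sum_distrib_left
    proof (intro sum.cong refl)
      fix i assume i: "i \<in> {1..n}"
      show "2 * of_real (l i) * (1 - a) * (- 1 / (x i - w)) = (1 - a) * (of_nat (m i)/(w - x i))"
        unfolding mc[OF i] by (rule aux_w2)
    qed
    ultimately show ?thesis unfolding Dw_def by (simp add: algebra_simps)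
  qed
  have gG: "g_fun n N l r (w, x, z) = Gc r" for r
    unfolding g_fun_def Gc_def m_def by simp
  have dR: "((\<lambda>t. g_fun n N l r (w, x, z(r := t)) * f (w, x, z(r := t))) has_field_derivative
      f (w,x,z) * (Gc r * ((1 - a) * Bc r))) (at (z r))" if r: "r \<in> {1..N}" for r
  proof -
    have wUr: "(w, x, z(r := z r)) \<in> U" using wU by simp
    have SLr: "((\<lambda>t. L (w,x,z(r:=t))) has_field_derivative h' / A (w,x,z)) (at (z r))"
      if "continuous_on U L" "\<And>p. p \<in> U \<Longrightarrow> exp (L p) = A p"
        "((\<lambda>t. A (w,x,z(r:=t))) has_field_derivative h') (at (z r))" "A (w,x,z) \<noteq> 0" for L A h'
    proof -
      have A0: "A (w,x,z(r := z r)) \<noteq> 0" using that(4) by simp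
      show ?thesis using slice_log[OF U cont_upd wUr that(1,2,3) A0] by (simp only: fun_upd_triv)
    qed
    define Dr where "Dr = (\<Sum>j\<in>{1..n}. \<Sum>i\<in>{1..<j}. 2 * of_real (l i) * of_real (l j) * a * (0::complex))
            + (\<Sum>i\<in>{1..n}. \<Sum>k\<in>{1..N}. - 2 * of_real (l i) * a * ((if k = r then 1 else 0) / (z k - x i)))
            + (\<Sum>s\<in>{1..N}. \<Sum>q\<in>{1..<s}. 2 * a * (((if s = r then 1 else 0) - (if q = r then 1 else 0)) / (z s - z q)))
            + (\<Sum>k\<in>{1..N}. (2 * a - 2) * ((if k = r then 1 else 0) / (z k - w)))
            + (\<Sum>i\<in>{1..n}. 2 * of_real (l i) * (1 - a) * 0)"
    have dEr: "((\<lambda>t. E (w,x,z(r:=t))) has_field_derivative Dr) (at (z r))"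
      unfolding E_def Dr_def
    proof (intro DERIV_add DERIV_sum DERIV_cmult)
      fix j i assume j: "j \<in> {1..n}" and i: "i \<in> {1..<j}"
      have d: "((\<lambda>t. fst (snd (w,x,z(r:=t))) j - fst (snd (w,x,z(r:=t))) i) has_field_derivative 0) (at (z r))"
        by simp
      have "((\<lambda>t. Lxx i j (w,x,z(r:=t))) has_field_derivative 0 / (fst (snd (w,x,z)) j - fst (snd (w,x,z)) i)) (at (z r))"
        by (rule SLr[OF _ _ d]) (use i j cxx eLxx xne in auto)
      then show "((\<lambda>t. Lxx i j (w,x,z(r:=t))) has_field_derivative 0) (at (z r))" by simp
    next
      fix i k assume i: "i \<in> {1..n}" and k: "k \<in> {1..N}"
      have d: "((\<lambda>t. snd (snd (w,x,z(r:=t))) k - fst (snd (w,x,z(r:=t))) i) has_field_derivative (if k = r then 1 else 0)) (at (z r))"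
        using DERIV_diff[OF d_upd[of z r k "z r"] DERIV_const[of "x i"]] by simp
      have "((\<lambda>t. Lzx i k (w,x,z(r:=t))) has_field_derivative (if k = r then 1 else 0) / (snd (snd (w,x,z)) k - fst (snd (w,x,z)) i)) (at (z r))"
        by (rule SLr[OF _ _ d]) (use i k czx eLzx zxne in auto)
      then show "((\<lambda>t. Lzx i k (w,x,z(r:=t))) has_field_derivative (if k = r then 1 else 0) / (z k - x i)) (at (z r))" by simp
    next
      fix s q assume s: "s \<in> {1..N}" and q: "q \<in> {1..<s}"
      have d: "((\<lambda>t. snd (snd (w,x,z(r:=t))) s - snd (snd (w,x,z(r:=t))) q) has_field_derivative (if s = r then 1 else 0) - (if q = r then 1 else 0)) (at (z r))"
        using DERIV_diff[OF d_upd[of z r s "z r"] d_upd[of z r q "z r"]] by simp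
      have "((\<lambda>t. Lzz q s (w,x,z(r:=t))) has_field_derivative ((if s = r then 1 else 0) - (if q = r then 1 else 0)) / (snd (snd (w,x,z)) s - snd (snd (w,x,z)) q)) (at (z r))"
        by (rule SLr[OF _ _ d]) (use q s czz eLzz zne in auto)
      then show "((\<lambda>t. Lzz q s (w,x,z(r:=t))) has_field_derivative ((if s = r then 1 else 0) - (if q = r then 1 else 0)) / (z s - z q)) (at (z r))" by simp
    next
      fix k assume k: "k \<in> {1..N}"
      have d: "((\<lambda>t. snd (snd (w,x,z(r:=t))) k - fst (w,x,z(r:=t))) has_field_derivative (if k = r then 1 else 0)) (at (z r))"
        using DERIV_diff[OF d_upd[of z r k "z r"] DERIV_const[of w]] by simp
      have "((\<lambda>t. Lzw k 0 (w,x,z(r:=t))) has_field_derivative (if k = r then 1 else 0) / (snd (snd (w,x,z)) k - fst (w,x,z))) (at (z r))"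
        by (rule SLr[OF _ _ d]) (use k czw eLzw zw in auto)
      then show "((\<lambda>t. Lzw k 0 (w,x,z(r:=t))) has_field_derivative (if k = r then 1 else 0) / (z k - w)) (at (z r))" by simp
    next
      fix i assume i: "i \<in> {1..n}"
      have d: "((\<lambda>t. fst (snd (w,x,z(r:=t))) i - fst (w,x,z(r:=t))) has_field_derivative 0) (at (z r))"
        by simp
      have "((\<lambda>t. Lxw i 0 (w,x,z(r:=t))) has_field_derivative 0 / (fst (snd (w,x,z)) i - fst (w,x,z))) (at (z r))"
        by (rule SLr[OF _ _ d]) (use i cxw eLxw xw in auto)
      then show "((\<lambda>t. Lxw i 0 (w,x,z(r:=t))) has_field_derivative 0) (at (z r))" by simp
    qed
    have dfr: "((\<lambda>t. f (w,x,z(r:=t))) has_field_derivative f (w,x,z) * Dr) (at (z r))"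
      using slice_exp[OF U cont_upd wUr fE dEr] by simp
    have gslice: "g_fun n N l r (w, x, z(r := t)) = - ((\<Prod>i\<in>{1..n}. ((t - x i)/(w - x i))^(m i)) * (\<Prod>s\<in>{1..N}-{r}. ((w - z s)/(t - z s))^2))" for t
    proof -
      have "(\<Prod>s\<in>{1..N}-{r}. ((w - (z(r:=t)) s)/((z(r:=t)) r - (z(r:=t)) s))^2) = (\<Prod>s\<in>{1..N}-{r}. ((w - z s)/(t - z s))^2)"
        by (intro prod.cong) auto
      moreover have "(\<Prod>i\<in>{1..n}. (((z(r:=t)) r - x i)/(w - x i))^(nat \<lfloor>2 * l i\<rfloor>)) = (\<Prod>i\<in>{1..n}. ((t - x i)/(w - x i))^(m i))"
        by (simp add: m_def)
      ultimately show ?thesis unfolding g_fun_def by simp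
    qed
    have dP1: "((\<lambda>t. \<Prod>i\<in>{1..n}. ((t - x i)/(w - x i))^(m i)) has_field_derivative
        (\<Prod>i\<in>{1..n}. ((z r - x i)/(w - x i))^(m i)) * (\<Sum>i\<in>{1..n}. of_nat (m i) / (z r - x i))) (at (z r))"
    proof (rule DERIV_prod_logd)
      fix i assume i: "i \<in> {1..n}"
      have p: "z r - x i \<noteq> 0" using zxne[OF i r] .
      have q: "w - x i \<noteq> 0" using xw[OF i] by simp
      have h: "((\<lambda>t. (t - x i)/(w - x i)) has_field_derivative 1 / (w - x i)) (at (z r))"
        by (rule DERIV_cong[OF DERIV_cdivide[OF DERIV_diff[OF DERIV_ident DERIV_const]]]) simp
      have "((\<lambda>t. ((t - x i)/(w - x i))^(m i)) has_field_derivative ((z r - x i)/(w - x i))^(m i) * (of_nat (m i) * (1 / (w - x i)) / ((z r - x i)/(w - x i)))) (at (z r))"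
        by (rule DERIV_pow_logd[OF h]) (use p q in simp)
      then show "((\<lambda>t. ((t - x i)/(w - x i))^(m i)) has_field_derivative ((z r - x i)/(w - x i))^(m i) * (of_nat (m i) / (z r - x i))) (at (z r))"
        by (simp only: aux_g1[OF p q])
    qed simp
    have dP2: "((\<lambda>t. \<Prod>s\<in>{1..N}-{r}. ((w - z s)/(t - z s))^2) has_field_derivative
        (\<Prod>s\<in>{1..N}-{r}. ((w - z s)/(z r - z s))^2) * (\<Sum>s\<in>{1..N}-{r}. - 2 / (z r - z s))) (at (z r))"
    proof (rule DERIV_prod_logd)
      fix s assume s: "s \<in> {1..N}-{r}"
      have p: "z r - z s \<noteq> 0" using zne[of s r] s r by auto
      have q: "w - z s \<noteq> 0" using zw[of s] s by auto
      have h0: "((\<lambda>t. (w - z s)/(t - z s)) has_field_derivative (0 * (z r - z s) - (w - z s) * (1 - 0)) / ((z r - z s) * (z r - z s))) (at (z r))"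
        by (rule DERIV_divide[OF DERIV_const DERIV_diff[OF DERIV_ident DERIV_const]]) (use p in simp)
      have h: "((\<lambda>t. (w - z s)/(t - z s)) has_field_derivative - (w - z s) / (z r - z s)^2) (at (z r))"
        using h0 by (simp add: power2_eq_square)
      have "((\<lambda>t. ((w - z s)/(t - z s))^2) has_field_derivative ((w - z s)/(z r - z s))^2 * (of_nat 2 * (- (w - z s) / (z r - z s)^2) / ((w - z s)/(z r - z s)))) (at (z r))"
        by (rule DERIV_pow_logd[OF h]) (use p q in simp)
      then show "((\<lambda>t. ((w - z s)/(t - z s))^2) has_field_derivative ((w - z s)/(z r - z s))^2 * (- 2 / (z r - z s))) (at (z r))"
        by (simp only: aux_g2'[OF p q])
    qed simp
    have S2: "(\<Sum>s\<in>{1..N}-{r}. - 2 / (z r - z s)) = - 2 * S r"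
      unfolding S_def by (simp add: sum_distrib_left)
    have dg: "((\<lambda>t. g_fun n N l r (w, x, z(r := t))) has_field_derivative Gc r * (S1 r - 2 * S r)) (at (z r))"
      unfolding gslice
      by (rule DERIV_cong[OF DERIV_minus[OF DERIV_mult[OF dP1 dP2]]]) (simp only: S2, simp add: Gc_def S1_def algebra_simps)
    define cw where "cw = 1 / (z r - w)"
    have DrS: "Dr = - a * S1 r + 2 * a * S r + (2 * a - 2) * cw"
    proof -
      have t2: "(\<Sum>i\<in>{1..n}. \<Sum>k\<in>{1..N}. - 2 * of_real (l i) * a * ((if k = r then 1 else 0) / (z k - x i))) = - a * S1 r"
      proof -
        have "(\<Sum>i\<in>{1..n}. \<Sum>k\<in>{1..N}. - 2 * of_real (l i) * a * ((if k = r then 1 else 0) / (z k - x i)))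
            = (\<Sum>i\<in>{1..n}. - 2 * of_real (l i) * a * ((if r = r then 1 else 0) / (z r - x i)))"
          using r by (intro sum.cong refl sum_single) auto
        also have "\<dots> = - a * S1 r" unfolding S1_def sum_distrib_left
          by (intro sum.cong refl) (simp add: mc)
        finally show ?thesis .
      qed
      have t3: "(\<Sum>s\<in>{1..N}. \<Sum>q\<in>{1..<s}. 2 * a * (((if s = r then 1 else 0) - (if q = r then 1 else 0)) / (z s - z q))) = 2 * a * S r"
        unfolding S_def by (rule pair_sum[OF r])
      have t4: "(\<Sum>k\<in>{1..N}. (2 * a - 2) * ((if k = r then 1 else 0) / (z k - w))) = (2 * a - 2) * ((if r = r then 1 else 0) / (z r - w))"
        using r by (intro sum_single) auto
      show ?thesis unfolding Dr_def t2 t3 t4 cw_def by simp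
    qed
    have Bc': "Bc r = S1 r - 2 * S r - 2 * cw"
      unfolding Bc_def S1_def S_def cw_def by (simp add: sum_distrib_left)
    show ?thesis
      by (rule DERIV_cong[OF DERIV_mult[OF dg dfr]]) (simp add: gG DrS Bc' algebra_simps)
  qed
  have Lh: "deriv (\<lambda>t. f (t,x,z)) w = f (w,x,z) * Dw" using dfw by (rule DERIV_imp_deriv)
  have "(\<Sum>r\<in>{1..N}. deriv (\<lambda>t. g_fun n N l r (w, x, z(r := t)) * f (w, x, z(r := t))) (z r))
      = (\<Sum>r\<in>{1..N}. f (w,x,z) * (Gc r * ((1 - a) * Bc r)))"
  proof (rule sum.cong[OF refl])
    fix r assume r: "r \<in> {1..N}"
    show "deriv (\<lambda>t. g_fun n N l r (w, x, z(r := t)) * f (w, x, z(r := t))) (z r) = f (w,x,z) * (Gc r * ((1 - a) * Bc r))"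
      using dR[OF r] by (rule DERIV_imp_deriv)
  qed
  also have "\<dots> = f (w,x,z) * (1 - a) * (\<Sum>r\<in>{1..N}. Gc r * Bc r)"
    unfolding sum_distrib_left by (intro sum.cong refl) (simp add: algebra_simps)
  also have "\<dots> = f (w,x,z) * Dw" unfolding core' Dw' by simp
  finally show ?thesis using Lh by simp
qed

end
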